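(* For every $x\in\mathrm{mon}(\mathcal{B})$, \[ \sup_{N\in\mathbb{N}}\frac1{\sqrt N}\sum_{n=1}^N|x_n|<\infty; \] in particular $\mathrm{mon}(\mathcal{B})\subset\ell_{2,\infty}$.
   Context: For $N\in\mathbb{N}$, $\mathcal{B}_N$ is the space of functions $f\colon\{-1,1\}^N\to\mathbb{R}$ with sup norm and Fourier–Walsh coefficients $\widehat f(S)=2^{-N}\sum_xf(x)x^S$, $x^S=\prod_{n\in S}x_n$; $\mathcal{B}=\bigcup_N\mathcal{B}_N$. $\mathrm{mon}(\mathcal{B})$ is the set of $x\in\mathbb{R}^{\mathbb{N}}$ for which there is $C>0$ such that $\sum_{S\subset\{1,\dots,N\}}|\widehat f(S)x^S|\le C\|f\|_\infty$ for all $N$ and all $f\in\mathcal{B}_N$. $\ell_{2,\infty}$ is the space of real sequences $x$ with $\sup_n\sqrt n\,x^*_n<\infty$, $x^*$ the decreasing rearrangement of $(|x_n|)$. *)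

theory Defs
  imports "HOL-Analysis.Analysis" "HOL-Library.FuncSet"
begin

definition cube :: "nat \<Rightarrow> (nat \<Rightarrow> real) set" where
  "cube N = PiE {1..N} (\<lambda>_. {-1, 1})"

definition supnorm :: "nat \<Rightarrow> ((nat \<Rightarrow> real) \<Rightarrow> real) \<Rightarrow> real" where
  "supnorm N f = Max ((\<lambda>x. \<bar>f x\<bar>) ` cube N)"

definition walsh_coeff :: "nat \<Rightarrow> ((nat \<Rightarrow> real) \<Rightarrow> real) \<Rightarrow> nat set \<Rightarrow> real" where
  "walsh_coeff N f S = (1 / 2 ^ N) * (\<Sum>x\<in>cube N. f x * (\<Prod>n\<in>S. x n))"

text \<open>mon(B): sequences x = (x_1, x_2, ...) (value at 0 irrelevant).\<close>
definition monB :: "(nat \<Rightarrow> real) set" where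
  "monB = {x. \<exists>C>0. \<forall>N. \<forall>f :: (nat \<Rightarrow> real) \<Rightarrow> real.
      (\<Sum>S\<in>Pow {1..N}. \<bar>walsh_coeff N f S * (\<Prod>n\<in>S. x n)\<bar>) \<le> C * supnorm N f}"

text \<open>Decreasing rearrangement x*_n of (|x_k|)_{k>=1}, as an extended real.\<close>
definition dec_rearr :: "(nat \<Rightarrow> real) \<Rightarrow> nat \<Rightarrow> ereal" where
  "dec_rearr x n = (INF J\<in>{J. finite J \<and> card J < n}. SUP k\<in>{1..} - J. ereal \<bar>x k\<bar>)"

definition ell_2_inf :: "(nat \<Rightarrow> real) set" where
  "ell_2_inf = {x. \<exists>C::real. \<forall>n\<ge>1. ereal (sqrt (real n)) * dec_rearr x n \<le> ereal C}"

end

theory Submission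
  imports Defs
begin

lemma cube_fin: "finite (cube N)" unfolding cube_def by (intro finite_PiE) auto

lemma coeff_sum:
  fixes a b :: real
  assumes T: "T \<subseteq> {1..N}" and n: "n \<in> T"
  shows "(\<Sum>y\<in>cube N. (\<Prod>k\<in>T. (of_real a + \<i> * of_real (b * y k))) * complex_of_real (y n))
        = of_real (2^N * a^(card T - 1)) * (\<i> * of_real b)"
proof -
  define h where "h k v = (if k \<in> T then (of_real a + \<i> * of_real (b * v)) else 1) * (if k = n then complex_of_real v else 1)" for k v
  have nN: "n \<in> {1..N}" using T n by auto
  have fT: "finite T" using T finite_subset by blast
  have "(\<Prod>k\<in>T. (of_real a + \<i> * of_real (b * y k))) * complex_of_real (y n) = (\<Prod>k\<in>{1..N}. h k (y k))" for y
  proof -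
    have "(\<Prod>k\<in>{1..N}. h k (y k)) = (\<Prod>k\<in>{1..N}. (if k \<in> T then (of_real a + \<i> * of_real (b * y k)) else 1)) *
       (\<Prod>k\<in>{1..N}. (if k = n then complex_of_real (y k) else 1))"
      unfolding h_def by (simp add: prod.distrib)
    also have "(\<Prod>k\<in>{1..N}. (if k \<in> T then (of_real a + \<i> * of_real (b * y k)) else 1)) = (\<Prod>k\<in>T. (of_real a + \<i> * of_real (b * y k)))"
      by (subst prod.inter_restrict[symmetric]) (use T in \<open>auto simp: Int_absorb1\<close>)
    also have "(\<Prod>k\<in>{1..N}. (if k = n then complex_of_real (y k) else 1)) = complex_of_real (y n)"
      using nN by (simp add: prod.delta)
    finally show ?thesis by simp
  qed
  hence "(\<Sum>y\<in>cube N. (\<Prod>k\<in>T. (of_real a + \<i> * of_real (b * y k))) * complex_of_real (y n))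
      = (\<Sum>y\<in>PiE {1..N} (\<lambda>_. {-1,1}). \<Prod>k\<in>{1..N}. h k (y k))"
    unfolding cube_def by simp
  also have "\<dots> = (\<Prod>k\<in>{1..N}. \<Sum>v\<in>{-1,1}. h k v)"
    by (subst prod_sum_PiE) auto
  also have "\<dots> = (\<Prod>k\<in>{1..N}. 2 * (if k = n then (\<i> * of_real b) else if k \<in> T then complex_of_real a else 1))"
    by (intro prod.cong refl) (auto simp: h_def n complex_eq_iff)
  also have "\<dots> = 2^N * (\<Prod>k\<in>{1..N}. (if k = n then (\<i> * of_real b) else if k \<in> T then complex_of_real a else 1))"
    by (simp add: prod.distrib)
  also have "(\<Prod>k\<in>{1..N}. (if k = n then (\<i> * of_real b) else if k \<in> T then complex_of_real a else 1))
      = (\<i> * of_real b) * (\<Prod>k\<in>{1..N}-{n}. (if k \<in> T then complex_of_real a else 1))"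
    using nN by (subst prod.remove[of _ n]) auto
  also have "(\<Prod>k\<in>{1..N}-{n}. (if k \<in> T then complex_of_real a else 1)) = complex_of_real a ^ card (({1..N}-{n}) \<inter> T)"
    by (subst prod.inter_restrict[symmetric]) auto
  also have "({1..N}-{n}) \<inter> T = T - {n}" using T by auto
  also have "card (T - {n}) = card T - 1" using n fT by simp
  finally show ?thesis by simp
qed


lemma key:
  fixes x :: "nat \<Rightarrow> real" and C :: real
  assumes C: "C > 0"
    and hC: "\<forall>N. \<forall>f :: (nat \<Rightarrow> real) \<Rightarrow> real.
      (\<Sum>S\<in>Pow {1..N}. \<bar>walsh_coeff N f S * (\<Prod>n\<in>S. x n)\<bar>) \<le> C * supnorm N f"
    and T: "T \<subseteq> {1..N}"
  shows "(\<Sum>n\<in>T. \<bar>x n\<bar>) \<le> 3 * C * sqrt (card T)"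
proof (cases "T = {}")
  case True thus ?thesis by simp
next
  case False
  have fT: "finite T" using T finite_subset by blast
  define m where "m = card T"
  have m1: "m \<ge> 1" using False fT m_def by (simp add: Suc_leI card_gt_0_iff)
  define b where "b = 1 / (2 * sqrt m)"
  define a where "a = sqrt (1 - b^2)"
  have b0: "b > 0" using m1 b_def by simp
  have b2: "b^2 = 1 / (4 * m)" using m1 by (simp add: b_def power_divide power_mult_distrib)
  have b2le: "b^2 \<le> 1/4"
  proof -
    have "1/(4*real m) \<le> 1/4" using m1 by (intro divide_left_mono) auto
    thus ?thesis using b2 by simp
  qed
  have a2: "a^2 = 1 - b^2" using b2le by (simp add: a_def)
  have a0: "a \<ge> 0" and a1: "a \<le> 1" using b2le by (auto simp: a_def)
  have ab: "a^2 + b^2 = 1" using a2 by simp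
  define P where "P y = (\<Prod>k\<in>T. (of_real a + \<i> * of_real (b * y k)))" for y :: "nat \<Rightarrow> real"
  define g where "g y = Im (P y)" for y
  have coef: "walsh_coeff N g {n} = a^(m-1) * b" if n: "n \<in> T" for n
  proof -
    have "walsh_coeff N g {n} = (1/2^N) * Im (\<Sum>y\<in>cube N. P y * complex_of_real (y n))"
      unfolding walsh_coeff_def g_def by (simp add: Im_sum)
    also have "(\<Sum>y\<in>cube N. P y * complex_of_real (y n)) = of_real (2^N * a^(m-1)) * (\<i> * of_real b)"
      unfolding P_def m_def using coeff_sum[OF T n] by simp
    finally show ?thesis by simp
  qed
  have gle: "\<bar>g y\<bar> \<le> 1" if y: "y \<in> cube N" for y
  proof -
    have "\<bar>g y\<bar> \<le> cmod (P y)" unfolding g_def by (rule abs_Im_le_cmod)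
    also have "cmod (P y) = (\<Prod>k\<in>T. cmod (of_real a + \<i> * of_real (b * y k)))"
      unfolding P_def by (simp add: prod_norm)
    also have "\<dots> = (\<Prod>k\<in>T. 1)"
    proof (intro prod.cong refl)
      fix k assume k: "k \<in> T"
      hence "k \<in> {1..N}" using T by auto
      hence "y k \<in> {-1,1}" using y unfolding cube_def by (auto simp: PiE_def Pi_def)
      hence "(y k)^2 = 1" by auto
      thus "cmod (of_real a + \<i> * of_real (b * y k)) = 1"
        using ab by (simp add: cmod_def power_mult_distrib)
    qed
    finally show ?thesis by simp
  qed
  have cne: "cube N \<noteq> {}" unfolding cube_def by (simp add: PiE_eq_empty_iff)
  have sup1: "supnorm N g \<le> 1"
    unfolding supnorm_def using cube_fin cne gle by (subst Max_le_iff) auto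
  have "(\<Sum>n\<in>T. \<bar>walsh_coeff N g {n} * (\<Prod>k\<in>{n}. x k)\<bar>)
      = (\<Sum>S\<in>(\<lambda>n. {n}) ` T. \<bar>walsh_coeff N g S * (\<Prod>k\<in>S. x k)\<bar>)"
    by (subst sum.reindex) (auto simp: inj_on_def)
  also have "\<dots> \<le> (\<Sum>S\<in>Pow {1..N}. \<bar>walsh_coeff N g S * (\<Prod>k\<in>S. x k)\<bar>)"
    by (rule sum_mono2) (use T in auto)
  also have "\<dots> \<le> C * supnorm N g" using hC by blast
  also have "\<dots> \<le> C" using sup1 C by simp
  finally have "(\<Sum>n\<in>T. \<bar>walsh_coeff N g {n} * (\<Prod>k\<in>{n}. x k)\<bar>) \<le> C" .
  moreover have "(\<Sum>n\<in>T. \<bar>walsh_coeff N g {n} * (\<Prod>k\<in>{n}. x k)\<bar>) = a^(m-1) * b * (\<Sum>n\<in>T. \<bar>x n\<bar>)"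
    using coef a0 b0 by (simp add: sum_distrib_left abs_mult)
  ultimately have main: "a^(m-1) * b * (\<Sum>n\<in>T. \<bar>x n\<bar>) \<le> C" by simp
  have "(a^2)^(m-1) \<le> a^(m-1)"
    using a0 a1 by (intro power_mono) (auto simp: power2_eq_square mult_left_le)
  moreover have "1 + real (m-1) * (- (b^2)) \<le> (1 + - (b^2))^(m-1)"
    using b2le by (intro Bernoulli_inequality) auto
  moreover have "1 + real (m-1) * (- (b^2)) \<ge> 3/4"
  proof -
    have "real (m-1) * b^2 \<le> real m * b^2" using b0 by (simp add: mult_right_mono)
    also have "\<dots> = 1/4" using m1 b2 by simp
    finally show ?thesis by simp
  qed
  ultimately have apow: "a^(m-1) \<ge> 3/4" using a2 by simp
  have "3/4 * b * (\<Sum>n\<in>T. \<bar>x n\<bar>) \<le> a^(m-1) * b * (\<Sum>n\<in>T. \<bar>x n\<bar>)"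
    using apow b0 by (intro mult_right_mono) (auto simp: sum_nonneg)
  with main have "3/4 * b * (\<Sum>n\<in>T. \<bar>x n\<bar>) \<le> C" by simp
  hence "(\<Sum>n\<in>T. \<bar>x n\<bar>) \<le> C * (8/3) * sqrt m"
    using m1 by (simp add: b_def field_simps)
  also have "\<dots> \<le> 3 * C * sqrt m" using C by (simp add: mult_right_mono)
  finally show ?thesis by (simp add: m_def)
qed


lemma monB_bound:
  assumes "x \<in> monB"
  obtains K where "K \<ge> 0" "\<And>T. finite T \<Longrightarrow> T \<subseteq> {1..} \<Longrightarrow> (\<Sum>n\<in>T. \<bar>x n\<bar>) \<le> K * sqrt (card T)"
proof -
  obtain C where C: "C > 0" and hC: "\<forall>N. \<forall>f :: (nat \<Rightarrow> real) \<Rightarrow> real.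
      (\<Sum>S\<in>Pow {1..N}. \<bar>walsh_coeff N f S * (\<Prod>n\<in>S. x n)\<bar>) \<le> C * supnorm N f"
    using assms unfolding monB_def by blast
  have "(\<Sum>n\<in>T. \<bar>x n\<bar>) \<le> 3 * C * sqrt (card T)" if "finite T" "T \<subseteq> {1..}" for T
  proof -
    have "T \<subseteq> {1..Max (insert 0 T)}" using that by auto
    thus ?thesis by (rule key[OF C hC])
  qed
  thus ?thesis using that[of "3*C"] C by simp
qed

theorem proposition6p12:
  shows "(\<forall>x\<in>monB. \<exists>M::real. \<forall>N\<ge>1. (1 / sqrt (real N)) * (\<Sum>n=1..N. \<bar>x n\<bar>) \<le> M)
         \<and> monB \<subseteq> ell_2_inf"
proof
  show "\<forall>x\<in>monB. \<exists>M::real. \<forall>N\<ge>1. (1 / sqrt (real N)) * (\<Sum>n=1..N. \<bar>x n\<bar>) \<le> M"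
  proof
    fix x assume "x \<in> monB"
    then obtain K where K: "K \<ge> 0" "\<And>T. finite T \<Longrightarrow> T \<subseteq> {1..} \<Longrightarrow> (\<Sum>n\<in>T. \<bar>x n\<bar>) \<le> K * sqrt (card T)"
      by (rule monB_bound) blast+
    have "(1 / sqrt (real N)) * (\<Sum>n=1..N. \<bar>x n\<bar>) \<le> K" if "N \<ge> 1" for N
    proof -
      have "(\<Sum>n=1..N. \<bar>x n\<bar>) \<le> K * sqrt N" using K(2)[of "{1..N}"] by auto
      thus ?thesis using that by (simp add: field_simps)
    qed
    thus "\<exists>M::real. \<forall>N\<ge>1. (1 / sqrt (real N)) * (\<Sum>n=1..N. \<bar>x n\<bar>) \<le> M" by blast
  qed
next
  show "monB \<subseteq> ell_2_inf"
  proof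
    fix x assume "x \<in> monB"
    then obtain K where K: "K \<ge> 0" "\<And>T. finite T \<Longrightarrow> T \<subseteq> {1..} \<Longrightarrow> (\<Sum>n\<in>T. \<bar>x n\<bar>) \<le> K * sqrt (card T)"
      by (rule monB_bound) blast+
    have "ereal (sqrt (real n)) * dec_rearr x n \<le> ereal K" if n: "n \<ge> 1" for n
    proof -
      define c where "c = K / sqrt n"
      define A where "A = {k. k \<ge> 1 \<and> \<bar>x k\<bar> > c}"
      have nc: "real n * c = K * sqrt n" using n
        by (simp add: c_def field_simps)
      have sm: "\<not> (\<exists>B. finite B \<and> card B = n \<and> B \<subseteq> A)"
      proof
        assume "\<exists>B. finite B \<and> card B = n \<and> B \<subseteq> A"
        then obtain B where B: "finite B" "card B = n" "B \<subseteq> A" by blast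
        have "B \<noteq> {}" using B n by auto
        hence "(\<Sum>k\<in>B. c) < (\<Sum>k\<in>B. \<bar>x k\<bar>)"
          using B by (intro sum_strict_mono) (auto simp: A_def)
        moreover have "(\<Sum>k\<in>B. \<bar>x k\<bar>) \<le> K * sqrt n" using K(2)[of B] B by (auto simp: A_def)
        ultimately show False using B nc by simp
      qed
      have finA: "finite A" using sm infinite_arbitrarily_large by blast
      have cardA: "card A < n"
      proof (rule ccontr)
        assume "\<not> card A < n"
        then obtain B where "B \<subseteq> A" "card B = n" using obtain_subset_with_card_n by (metis not_less)
        thus False using sm finA finite_subset by blast
      qed
      have "dec_rearr x n \<le> (SUP k\<in>{1..} - A. ereal \<bar>x k\<bar>)"
        unfolding dec_rearr_def using finA cardA by (intro INF_lower) auto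
      also have "\<dots> \<le> ereal c"
        by (intro SUP_least) (auto simp: A_def)
      finally have "ereal (sqrt n) * dec_rearr x n \<le> ereal (sqrt n) * ereal c"
        by (intro ereal_mult_left_mono) auto
      also have "\<dots> = ereal K" using n by (simp add: c_def)
      finally show ?thesis .
    qed
    thus "x \<in> ell_2_inf" unfolding ell_2_inf_def by blast
  qed
qed

end
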